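(* For every real number $r\ge 1$, the function $f_r:[0,1]\to\mathbb{R}$, \[ f_r(x)=\sum_{m\in\mathbb{Z}}\left|\frac{\sin(\pi(x+m))}{\pi(x+m)}\right|^{2r}, \] attains a global minimum on $[0,1]$ at $x=\tfrac12$; that is, $f_r(x)\ge f_r(\tfrac12)$ for all $x\in[0,1]$.
   Context: The summand $\frac{\sin(\pi y)}{\pi y}$ is interpreted as $1$ when $y=0$. The series converges absolutely for every $x\in\mathbb{R}$ and every $r\ge1$. *)

theory Defs
  imports "HOL-Analysis.Analysis"
begin

definition nsinc :: "real \<Rightarrow> real" where
  "nsinc y = (if y = 0 then 1 else sin (pi * y) / (pi * y))"

definition f_r :: "real \<Rightarrow> real \<Rightarrow> real" where
  "f_r r x = (\<Sum>\<^sub>\<infinity>m::int. \<bar>nsinc (x + real_of_int m)\<bar> powr (2 * r))"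

end

theory Submission
  imports Defs
begin

lemma reflection_real:
  fixes x :: real assumes "0 < x" "x < 1"
  shows "Gamma x * Gamma (1 - x) = pi / sin (pi * x)"
proof -
  have e1: "1 - complex_of_real x = complex_of_real (1 - x)" by simp
  have e2: "complex_of_real pi * complex_of_real x = complex_of_real (pi * x)" by simp
  have e3: "sin (complex_of_real pi * complex_of_real x) = complex_of_real (sin (pi * x))"
    by (metis of_real_mult sin_of_real)
  note G = Gamma_reflection_complex[of "complex_of_real x", unfolded e1 e3 Gamma_complex_of_real]
  from G have "complex_of_real (Gamma x * Gamma (1 - x)) = complex_of_real (pi / sin (pi * x))"
    by simp
  then show ?thesis by (simp only: of_real_eq_iff)
qed

lemma deriv_zero_const:
  fixes f :: "real \<Rightarrow> real"
  assumes "(f has_real_derivative D) (at x)" "open S" "x \<in> S" "\<And>y. y \<in> S \<Longrightarrow> f y = c"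
  shows "D = 0"
proof -
  have "((\<lambda>_. c) has_real_derivative D) (at x)"
    by (rule has_field_derivative_transform_within_open[OF assms(1-3)]) (use assms(4) in auto)
  moreover have "((\<lambda>_. c) has_real_derivative 0) (at x)" by (rule DERIV_const)
  ultimately show ?thesis by (rule DERIV_unique)
qed

lemma log_reflection:
  fixes x :: real assumes "0 < x" "x < 1"
  shows "ln_Gamma x + ln_Gamma (1 - x) + ln (sin (pi * x)) = ln pi"
proof -
  have s: "sin (pi * x) > 0" using assms by (intro sin_gt_zero) auto
  have g: "Gamma x > 0" "Gamma (1-x) > 0" using assms by auto
  then have g': "Gamma x \<noteq> 0" "Gamma (1-x) \<noteq> 0" by auto
  have "ln_Gamma x + ln_Gamma (1 - x) + ln (sin (pi * x)) = ln (Gamma x * Gamma (1-x) * sin (pi * x))"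
    using assms s g g' by (simp add: ln_Gamma_real_pos ln_mult)
  also have "\<dots> = ln pi" using reflection_real[OF assms] s by simp
  finally show ?thesis .
qed

lemma digamma_reflection:
  fixes x :: real assumes "0 < x" "x < 1"
  shows "Digamma x - Digamma (1 - x) + pi * cos (pi * x) / sin (pi * x) = 0"
proof (rule deriv_zero_const[where S = "{0<..<1}" and c = "ln pi" and
      f = "\<lambda>x. ln_Gamma x + ln_Gamma (1 - x) + ln (sin (pi * x))"])
  have s: "sin (pi * x) > 0" using assms by (intro sin_gt_zero) auto
  show "((\<lambda>x. ln_Gamma x + ln_Gamma (1 - x) + ln (sin (pi * x))) has_real_derivative
     Digamma x - Digamma (1 - x) + pi * cos (pi * x) / sin (pi * x)) (at x)"
    using assms s by (auto intro!: derivative_eq_intros simp: field_simps)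
qed (use assms log_reflection in auto)

lemma trigamma_reflection:
  fixes x :: real assumes "0 < x" "x < 1"
  shows "Polygamma 1 x + Polygamma 1 (1 - x) = pi\<^sup>2 / (sin (pi * x))\<^sup>2"
proof -
  have "Polygamma 1 x + Polygamma 1 (1 - x) - pi\<^sup>2 / (sin (pi * x))\<^sup>2 = 0"
  proof (rule deriv_zero_const[where S = "{0<..<1}" and c = 0 and
      f = "\<lambda>x. Digamma x - Digamma (1 - x) + pi * cos (pi * x) / sin (pi * x)"])
    have s: "sin (pi * x) > 0" using assms by (intro sin_gt_zero) auto
    have nz: "x \<notin> \<int>\<^sub>\<le>\<^sub>0" "1 - x \<notin> \<int>\<^sub>\<le>\<^sub>0" using assms by (auto elim!: nonpos_Ints_cases)
    show "((\<lambda>x. Digamma x - Digamma (1 - x) + pi * cos (pi * x) / sin (pi * x)) has_real_derivative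
     Polygamma 1 x + Polygamma 1 (1 - x) - pi\<^sup>2 / (sin (pi * x))\<^sup>2) (at x)"
      using assms s nz
    proof (auto intro!: derivative_eq_intros simp: field_simps power2_eq_square)
      have key: "pi * pi = pi * (pi * (c * c)) + pi * (pi * (s * s))" if h: "s * s + c * c = 1" for s c :: real
      proof -
        have "pi * (pi * (c * c)) + pi * (pi * (s * s)) = pi * pi * (s * s + c * c)" by (simp add: algebra_simps)
        then show ?thesis using h by simp
      qed
      show "pi * pi = pi * (pi * (cos (pi * x) * cos (pi * x))) + pi * (pi * (sin (pi * x) * sin (pi * x)))"
        by (rule key) (metis sin_cos_squared_add power2_eq_square)
    qed
  qed (use assms digamma_reflection in auto)
  then show ?thesis by simp
qed

lemma pair_sums:
  fixes x :: real assumes "0 < x" "x < 1"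
  shows "(\<lambda>n. 1 / (x + real n)\<^sup>2 + 1 / (1 - x + real n)\<^sup>2) sums (pi\<^sup>2 / (sin (pi * x))\<^sup>2)"
proof -
  have a: "(\<lambda>k. inverse ((y + of_nat k) ^ Suc 1)) sums ((-1) ^ Suc 1 * Polygamma 1 y / fact 1)"
    if "y \<noteq> 0" for y :: real
    by (rule Polygamma_LIMSEQ) (use that in auto)
  have b: "(\<lambda>k. 1 / (y + real k)\<^sup>2) sums (Polygamma 1 y)" if "y \<noteq> 0" for y :: real
  proof -
    have "inverse ((y + of_nat k) ^ Suc 1) = 1 / (y + real k)\<^sup>2" for k
      by (simp add: numeral_2_eq_2 divide_inverse)
    moreover have "((-1) ^ Suc 1 * Polygamma 1 y / fact 1) = Polygamma 1 y" by simp
    ultimately show ?thesis using a[OF that] by simp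
  qed
  have "(\<lambda>n. 1 / (x + real n)\<^sup>2 + 1 / (1 - x + real n)\<^sup>2) sums (Polygamma 1 x + Polygamma 1 (1 - x))"
    by (intro sums_add b) (use assms in auto)
  then show ?thesis using trigamma_reflection[OF assms] by simp
qed

lemma sin_shift_sq: "(sin (pi * (x + of_int m)))\<^sup>2 = (sin (pi * x))\<^sup>2"
proof -
  have c: "(cos (pi * of_int m))\<^sup>2 = 1"
    using sin_cos_squared_add[of "pi * of_int m"] by simp
  have "sin (pi * (x + of_int m)) = sin (pi * x) * cos (pi * of_int m)"
    by (simp add: distrib_left sin_add)
  then show ?thesis using c by (simp add: power_mult_distrib)
qed

lemma nsinc_sq: "y \<noteq> 0 \<Longrightarrow> (nsinc y)\<^sup>2 = (sin (pi * y))\<^sup>2 / (pi * y)\<^sup>2"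
  by (simp add: nsinc_def power_divide)

lemma nsinc_abs_le1: "\<bar>nsinc y\<bar> \<le> 1"
proof (cases "y = 0")
  case False
  have "\<bar>sin (pi * y)\<bar> \<le> \<bar>pi * y\<bar>" by (rule abs_sin_x_le_abs_x)
  moreover have "\<bar>pi * y\<bar> > 0" using False by simp
  ultimately show ?thesis using False by (simp add: nsinc_def abs_divide)
qed (simp add: nsinc_def)

lemma nsinc_minus: "nsinc (- y) = nsinc y"
  by (simp add: nsinc_def)

lemma nsinc_int: "nsinc (of_int k) = (if k = 0 then 1 else 0)"
  by (simp add: nsinc_def mult.commute)

lemma pair_sum_one:
  fixes x :: real assumes "0 \<le> x" "x \<le> 1"
  shows "(\<lambda>n. (nsinc (x + real n))\<^sup>2 + (nsinc (x - real n - 1))\<^sup>2) sums 1"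
proof -
  consider "x = 0" | "x = 1" | "0 < x \<and> x < 1" using assms by linarith
  then show ?thesis
  proof cases
    case 1
    have "(\<lambda>n. (nsinc (x + real n))\<^sup>2 + (nsinc (x - real n - 1))\<^sup>2) = (\<lambda>n. if n = 0 then 1 else 0)"
    proof
      fix n :: nat
      have e1: "x + real n = of_int (int n)" using 1 by simp
      have e2: "x - real n - 1 = of_int (- int n - 1)" using 1 by simp
      show "(nsinc (x + real n))\<^sup>2 + (nsinc (x - real n - 1))\<^sup>2 = (if n = 0 then 1 else 0)"
        unfolding e1 e2 nsinc_int by auto
    qed
    then show ?thesis using sums_single[of 0 "\<lambda>_. 1::real"] by simp
  next
    case 2
    have "(\<lambda>n. (nsinc (x + real n))\<^sup>2 + (nsinc (x - real n - 1))\<^sup>2) = (\<lambda>n. if n = 0 then 1 else 0)"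
    proof
      fix n :: nat
      have e1: "x + real n = of_int (int n + 1)" using 2 by simp
      have e2: "x - real n - 1 = of_int (- int n)" using 2 by simp
      show "(nsinc (x + real n))\<^sup>2 + (nsinc (x - real n - 1))\<^sup>2 = (if n = 0 then 1 else 0)"
        unfolding e1 e2 nsinc_int by auto
    qed
    then show ?thesis using sums_single[of 0 "\<lambda>_. 1::real"] by simp
  next
    case 3
    define s where "s = (sin (pi * x))\<^sup>2"
    have "sin (pi * x) > 0" using 3 by (intro sin_gt_zero) auto
    then have s0: "s > 0" unfolding s_def by simp
    have "(\<lambda>n. (s / pi\<^sup>2) * (1 / (x + real n)\<^sup>2 + 1 / (1 - x + real n)\<^sup>2)) sums ((s / pi\<^sup>2) * (pi\<^sup>2 / s))"
      unfolding s_def by (intro sums_mult pair_sums) (use 3 in auto)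
    moreover have "(s / pi\<^sup>2) * (pi\<^sup>2 / s) = 1" using s0 by simp
    moreover have "(s / pi\<^sup>2) * (1 / (x + real n)\<^sup>2 + 1 / (1 - x + real n)\<^sup>2)
       = (nsinc (x + real n))\<^sup>2 + (nsinc (x - real n - 1))\<^sup>2" for n :: nat
    proof -
      have e1: "x + of_int (int n) = x + real n" by simp
      have e2: "x + of_int (- int n - 1) = x - real n - 1" by simp
      have sh1: "(sin (pi * (x + real n)))\<^sup>2 = s"
        using sin_shift_sq[of x "int n", unfolded e1] by (simp add: s_def)
      have sh2: "(sin (pi * (x - real n - 1)))\<^sup>2 = s"
        using sin_shift_sq[of x "- int n - 1", unfolded e2] by (simp add: s_def)
      have q: "(x - real n - 1)\<^sup>2 = (1 - x + real n)\<^sup>2" by (simp add: power2_eq_square algebra_simps)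
      have A: "(nsinc (x + real n))\<^sup>2 = (s / pi\<^sup>2) * (1 / (x + real n)\<^sup>2)"
        using 3 by (subst nsinc_sq) (simp_all add: sh1 power_mult_distrib)
      have B: "(nsinc (x - real n - 1))\<^sup>2 = (s / pi\<^sup>2) * (1 / (1 - x + real n)\<^sup>2)"
        using 3 by (subst nsinc_sq) (simp_all add: sh2 power_mult_distrib q del: of_nat_Suc)
      show ?thesis unfolding A B by (simp only: distrib_left)
    qed
    ultimately show ?thesis by simp
  qed
qed

lemma sin_taylor3: "sin y \<ge> y - y ^ 3 / 6" if "y \<ge> 0" for y :: real
proof -
  have "\<bar>sin y - (\<Sum>m<3. sin_coeff m * y ^ m)\<bar> \<le> inverse (fact 3) * \<bar>y\<bar> ^ 3"
    by (rule Maclaurin_sin_bound)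
  moreover have "(\<Sum>m<3. sin_coeff m * y ^ m) = y"
    by (simp add: numeral_3_eq_3 sin_coeff_def)
  moreover have "inverse (fact 3) * \<bar>y\<bar> ^ 3 = y ^ 3 / 6"
  proof -
    have f: "fact 3 = (6::real)" by (simp add: fact_numeral)
    have a: "\<bar>y\<bar> ^ 3 = y ^ 3" using that by simp
    show ?thesis unfolding f a by simp
  qed
  ultimately show ?thesis by linarith
qed

lemma sin_lower:
  fixes u :: real assumes "0 \<le> u" "u \<le> 1/2"
  shows "sin (pi * u) \<ge> 6/5 * u"
proof -
  have h: "sin (pi * u) \<ge> pi * u - (pi * u) ^ 3 / 6"
    by (rule sin_taylor3) (use assms in simp)
  have p1: "pi \<le> 16/5" using pi_approx(2) by simp
  have p0: "pi > 3" by (rule pi_gt3)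
  have "pi * pi \<le> (16/5) * (16/5)" using p1 p0 by (intro mult_mono) auto
  then have p2: "pi ^ 2 \<le> 256/25" by (simp add: power2_eq_square)
  have "u ^ 2 \<le> (1/2) ^ 2" using assms by (intro power_mono) auto
  then have u2: "u ^ 2 \<le> 1/4" by (simp add: power_divide)
  have "pi ^ 2 * u ^ 2 \<le> 256/25 * (1/4)" using p2 u2 by (intro mult_mono) auto
  then have k: "pi ^ 2 * u ^ 2 / 6 \<le> 32/75" by simp
  have e: "pi * u - (pi * u) ^ 3 / 6 = u * (pi * (1 - pi ^ 2 * u ^ 2 / 6))"
    by (simp add: power3_eq_cube power2_eq_square algebra_simps)
  have k2: "1 - pi ^ 2 * u ^ 2 / 6 \<ge> 43/75" using k by linarith
  have "3 * (43/75) \<le> pi * (1 - pi ^ 2 * u ^ 2 / 6)"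
    using p0 k2 by (intro mult_mono) auto
  then have "u * (3 * (43/75)) \<le> u * (pi * (1 - pi ^ 2 * u ^ 2 / 6))"
    using assms(1) by (rule mult_left_mono)
  moreover have "6/5 * u \<le> u * (3 * (43/75))" using assms by simp
  ultimately show ?thesis using h e by linarith
qed

lemma sin_sq_bound:
  fixes x :: real assumes "0 \<le> x" "x \<le> 1"
  shows "(sin (pi * x))\<^sup>2 \<le> 1 - 36/25 * (x - 1/2)\<^sup>2"
proof -
  define t where "t = x - 1/2"
  have "sin (pi * x) = cos (pi * t)"
    unfolding t_def by (simp add: right_diff_distrib cos_diff)
  then have e: "(sin (pi * x))\<^sup>2 = 1 - (sin (pi * t))\<^sup>2"
    by (simp add: cos_squared_eq)
  have "(sin (pi * t))\<^sup>2 = (sin (pi * \<bar>t\<bar>))\<^sup>2"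
    by (cases "t \<ge> 0") auto
  also have "\<dots> \<ge> (6/5 * \<bar>t\<bar>)\<^sup>2"
  proof (rule power_mono)
    have "\<bar>t\<bar> \<le> 1/2" unfolding t_def abs_le_iff using assms by linarith
    then show "6/5 * \<bar>t\<bar> \<le> sin (pi * \<bar>t\<bar>)" by (intro sin_lower) auto
  qed simp
  finally have "(sin (pi * t))\<^sup>2 \<ge> 36/25 * t\<^sup>2" by (simp add: power_mult_distrib power_divide)
  then show ?thesis using e unfolding t_def by simp
qed

lemma alg_bound:
  fixes c t s :: real
  assumes c: "c \<ge> 3/2" and t: "\<bar>t\<bar> \<le> 1/2" and s: "0 \<le> s" "s \<le> 1 - 36/25 * t\<^sup>2"
  shows "s / (t + c)\<^sup>2 + s / (t - c)\<^sup>2 \<le> 2 / c\<^sup>2"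
proof -
  have p1: "t + c \<ge> 1" "c - t \<ge> 1" using c t by auto
  have sq: "(t - c)\<^sup>2 = (c - t)\<^sup>2" by (simp add: power2_eq_square algebra_simps)
  define k :: real where "k = 36/25"
  have kc: "k * c\<^sup>2 \<ge> 3"
  proof -
    have "c\<^sup>2 \<ge> (3/2)\<^sup>2" using c by (intro power_mono) auto
    moreover have "(3/2::real)\<^sup>2 = 9/4" by (simp add: power2_eq_square)
    ultimately show ?thesis unfolding k_def by linarith
  qed
  have main: "s * ((c - t)\<^sup>2 + (t + c)\<^sup>2) * c\<^sup>2 \<le> 2 * ((t + c)\<^sup>2 * (c - t)\<^sup>2)"
  proof -
    have "s * ((c - t)\<^sup>2 + (t + c)\<^sup>2) * c\<^sup>2 \<le> (1 - k * t\<^sup>2) * ((c - t)\<^sup>2 + (t + c)\<^sup>2) * c\<^sup>2"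
      using s unfolding k_def by (intro mult_right_mono) auto
    also have "\<dots> = 2 * ((1 - k * t\<^sup>2) * (c\<^sup>2 + t\<^sup>2) * c\<^sup>2)"
      by (simp add: power2_eq_square algebra_simps)
    also have "(1 - k * t\<^sup>2) * (c\<^sup>2 + t\<^sup>2) * c\<^sup>2 = (c\<^sup>2 - t\<^sup>2)\<^sup>2 - t\<^sup>2 * ((k * c\<^sup>2 - 3) * c\<^sup>2 + k * t\<^sup>2 * c\<^sup>2 + t\<^sup>2)"
      by (simp add: power2_eq_square algebra_simps)
    also have "\<dots> \<le> (c\<^sup>2 - t\<^sup>2)\<^sup>2"
    proof -
      have "0 \<le> (k * c\<^sup>2 - 3) * c\<^sup>2 + k * t\<^sup>2 * c\<^sup>2 + t\<^sup>2"
        using kc unfolding k_def by (intro add_nonneg_nonneg) auto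
      then show ?thesis by simp
    qed
    also have "(c\<^sup>2 - t\<^sup>2)\<^sup>2 = (t + c)\<^sup>2 * (c - t)\<^sup>2" by (simp add: power2_eq_square algebra_simps)
    finally show ?thesis by simp
  qed
  have pos: "(t + c)\<^sup>2 > 0" "(c - t)\<^sup>2 > 0" "c\<^sup>2 > 0" using p1 c by auto
  have "s / (t + c)\<^sup>2 + s / (c - t)\<^sup>2 = s * ((c - t)\<^sup>2 + (t + c)\<^sup>2) / ((t + c)\<^sup>2 * (c - t)\<^sup>2)"
    using pos by (simp add: field_simps)
  also have "\<dots> \<le> 2 / c\<^sup>2"
    using main pos by (simp add: divide_le_eq field_simps)
  finally show ?thesis unfolding sq .
qed

lemma abs_powr_sq:
  fixes z r :: real assumes "r > 0"
  shows "\<bar>z\<bar> powr (2 * r) = (z\<^sup>2) powr r"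
proof -
  have e: "\<bar>z\<bar> powr 2 = z\<^sup>2" by simp
  have "\<bar>z\<bar> powr (2 * r) = (\<bar>z\<bar> powr 2) powr r" by (simp only: powr_powr)
  then show ?thesis unfolding e .
qed

lemma tangent_powr:
  fixes u b r :: real assumes u: "u \<ge> 0" and b: "b > 0" and r: "r \<ge> 1"
  shows "b powr r + r * b powr (r - 1) * (u - b) \<le> u powr r"
proof (cases "r = 1")
  case True
  then show ?thesis using u b by simp
next
  case False
  then have r1: "r > 1" using r by simp
  have bb: "b powr (r - 1) * b = b powr r"
    using powr_mult_base[of b "r - 1"] b by (simp add: mult.commute)
  show ?thesis
  proof (cases "u = 0")
    case True
    have "b powr r + r * b powr (r - 1) * (u - b) = (1 - r) * b powr r"
      using True bb by (simp add: algebra_simps)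
    also have "\<dots> \<le> 0" using r1 by (intro mult_nonpos_nonneg) auto
    finally show ?thesis using True by simp
  next
    case False
    then have u0: "u > 0" using u by simp
    have "(u powr r) powr (1/r) * (b powr r) powr (1 - 1/r) \<le> (1/r) * u powr r + (1 - 1/r) * b powr r"
      by (rule Youngs_inequality_0) (use r1 u0 b in auto)
    moreover have "(u powr r) powr (1/r) = u" using r1 u0 by (simp add: powr_powr)
    moreover have "(b powr r) powr (1 - 1/r) = b powr (r - 1)" using r1
      by (simp add: powr_powr algebra_simps)
    ultimately have y: "u * b powr (r - 1) \<le> (1/r) * u powr r + (1 - 1/r) * b powr r" by simp
    have "r * (u * b powr (r - 1)) \<le> r * ((1/r) * u powr r + (1 - 1/r) * b powr r)"
      using y r1 by (intro mult_left_mono) auto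
    also have "\<dots> = u powr r + (r - 1) * b powr r" using r1 by (simp add: algebra_simps)
    finally have "r * (u * b powr (r - 1)) \<le> u powr r + (r - 1) * b powr r" .
    moreover have "b powr r + r * b powr (r - 1) * (u - b) = b powr r + r * (u * b powr (r - 1)) - r * b powr r"
      using bb by (simp add: algebra_simps)
    moreover have "(r - 1) * b powr r = r * b powr r - b powr r" by (simp add: algebra_simps)
    ultimately show ?thesis by linarith
  qed
qed

lemma infsum_int_split:
  fixes g :: "real \<Rightarrow> real"
  assumes nn: "\<And>y. g y \<ge> 0"
    and s1: "summable (\<lambda>n. g (x + real n))" and s2: "summable (\<lambda>n. g (x - real n - 1))"
  shows "((\<lambda>m::int. g (x + real_of_int m)) has_sum (\<Sum>n. g (x + real n) + g (x - real n - 1))) UNIV"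
proof -
  have h1: "((\<lambda>n. g (x + real n)) has_sum (\<Sum>n. g (x + real n))) UNIV"
    by (rule sums_nonneg_imp_has_sum[OF summable_sums[OF s1]]) (rule nn)
  have h2: "((\<lambda>n. g (x - real n - 1)) has_sum (\<Sum>n. g (x - real n - 1))) UNIV"
    by (rule sums_nonneg_imp_has_sum[OF summable_sums[OF s2]]) (rule nn)
  have i1: "inj_on (int :: nat \<Rightarrow> int) UNIV" by (simp add: inj_on_def)
  have i2: "inj_on (\<lambda>n::nat. - int n - 1) UNIV" by (simp add: inj_on_def)
  have h1': "((\<lambda>m::int. g (x + real_of_int m)) has_sum (\<Sum>n. g (x + real n))) (range int)"
    using h1 by (subst has_sum_reindex[OF i1]) (simp add: o_def)
  have e2: "x + real_of_int (- int n - 1) = x - real n - 1" for n :: nat by simp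
  have h2': "((\<lambda>m::int. g (x + real_of_int m)) has_sum (\<Sum>n. g (x - real n - 1))) (range (\<lambda>n::nat. - int n - 1))"
    using h2 by (subst has_sum_reindex[OF i2]) (simp only: o_def e2)
  have disj: "range int \<inter> range (\<lambda>n::nat. - int n - 1) = {}" by auto
  have un: "range int \<union> range (\<lambda>n::nat. - int n - 1) = UNIV"
  proof (rule set_eqI, rule iffI)
    fix m :: int
    show "m \<in> range int \<union> range (\<lambda>n::nat. - int n - 1)"
    proof (cases "m \<ge> 0")
      case True
      then have "m = int (nat m)" by simp
      then show ?thesis by blast
    next
      case False
      then have "m = - int (nat (- m - 1)) - 1" by simp
      then show ?thesis by blast
    qed
  qed simp
  have "((\<lambda>m::int. g (x + real_of_int m)) has_sum ((\<Sum>n. g (x + real n)) + (\<Sum>n. g (x - real n - 1)))) UNIV"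
    using has_sum_Un_disjoint[OF h1' h2' disj] unfolding un .
  moreover have "(\<Sum>n. g (x + real n)) + (\<Sum>n. g (x - real n - 1)) = (\<Sum>n. g (x + real n) + g (x - real n - 1))"
    by (rule suminf_add[OF s1 s2])
  ultimately show ?thesis by simp
qed

lemma series_rep:
  fixes r x :: real assumes r: "r \<ge> 1" and x: "0 \<le> x" "x \<le> 1"
  shows "(\<lambda>n. ((nsinc (x + real n))\<^sup>2) powr r + ((nsinc (x - real n - 1))\<^sup>2) powr r) sums f_r r x"
proof -
  define g where "g y = ((nsinc y)\<^sup>2) powr r" for y
  have le: "g y \<le> (nsinc y)\<^sup>2" for y
  proof -
    have "(nsinc y)\<^sup>2 \<le> 1" using nsinc_abs_le1[of y] by (simp add: abs_square_le_1)
    then have "((nsinc y)\<^sup>2) powr r \<le> ((nsinc y)\<^sup>2) powr 1"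
      using r by (intro powr_mono') auto
    then show ?thesis unfolding g_def by simp
  qed
  have nn: "g y \<ge> 0" for y unfolding g_def by simp
  note S = pair_sum_one[OF x]
  have sa1: "summable (\<lambda>n. (nsinc (x + real n))\<^sup>2)"
    by (rule summable_comparison_test'[OF sums_summable[OF S], of 0]) simp
  have sa2: "summable (\<lambda>n. (nsinc (x - real n - 1))\<^sup>2)"
    by (rule summable_comparison_test'[OF sums_summable[OF S], of 0]) simp
  have s1: "summable (\<lambda>n. g (x + real n))"
    by (rule summable_comparison_test'[OF sa1, of 0]) (simp add: le nn abs_of_nonneg)
  have s2: "summable (\<lambda>n. g (x - real n - 1))"
    by (rule summable_comparison_test'[OF sa2, of 0]) (simp add: le nn abs_of_nonneg)
  have "((\<lambda>m::int. g (x + real_of_int m)) has_sum (\<Sum>n. g (x + real n) + g (x - real n - 1))) UNIV"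
    by (rule infsum_int_split[OF nn s1 s2])
  moreover have "g y = \<bar>nsinc y\<bar> powr (2 * r)" for y
    unfolding g_def using r by (simp add: abs_powr_sq)
  ultimately have "f_r r x = (\<Sum>n. g (x + real n) + g (x - real n - 1))"
    unfolding f_r_def by (simp add: infsumI)
  moreover have "summable (\<lambda>n. g (x + real n) + g (x - real n - 1))"
    by (rule summable_add[OF s1 s2])
  ultimately show ?thesis unfolding g_def by (simp add: sums_iff)
qed

lemma beta_eq: "(nsinc (1/2 + real n))\<^sup>2 = 1 / (pi * (1/2 + real n))\<^sup>2"
proof -
  have "(sin (pi * (1/2 + real_of_int (int n))))\<^sup>2 = (sin (pi * (1/2)))\<^sup>2" by (rule sin_shift_sq)
  then have s: "(sin (pi * (1/2 + real n)))\<^sup>2 = 1" by simp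
  have nz: "1/2 + real n \<noteq> 0" by (metis add_pos_nonneg less_numeral_extra(3) of_nat_0_le_iff zero_less_divide_1_iff zero_less_numeral)
  show ?thesis by (simp only: nsinc_sq[OF nz] s)
qed

lemma beta_minus: "(nsinc (1/2 - real n - 1))\<^sup>2 = (nsinc (1/2 + real n))\<^sup>2"
proof -
  have "1/2 - real n - 1 = - (1/2 + real n)" by simp
  then show ?thesis by (simp only: nsinc_minus)
qed

lemma D_nonpos:
  fixes x :: real assumes x: "0 \<le> x" "x \<le> 1" and n: "n \<ge> 1"
  shows "(nsinc (x + real n))\<^sup>2 + (nsinc (x - real n - 1))\<^sup>2 \<le> 2 * (nsinc (1/2 + real n))\<^sup>2"
proof -
  define s where "s = (sin (pi * x))\<^sup>2"
  define c where "c = 1/2 + real n"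
  define t where "t = x - 1/2"
  have e1: "x + of_int (int n) = x + real n" by simp
  have e2: "x + of_int (- int n - 1) = x - real n - 1" by simp
  have sh1: "(sin (pi * (x + real n)))\<^sup>2 = s"
    using sin_shift_sq[of x "int n", unfolded e1] by (simp add: s_def)
  have sh2: "(sin (pi * (x - real n - 1)))\<^sup>2 = s"
    using sin_shift_sq[of x "- int n - 1", unfolded e2] by (simp add: s_def)
  have nz1: "x + real n \<noteq> 0" using x n by linarith
  have nz2: "x - real n - 1 \<noteq> 0" using x n by linarith
  have tc1: "x + real n = t + c" unfolding t_def c_def by simp
  have tc2: "x - real n - 1 = t - c" unfolding t_def c_def by simp
  have A: "(nsinc (x + real n))\<^sup>2 = (1 / pi\<^sup>2) * (s / (t + c)\<^sup>2)"
    using nz1 by (simp add: nsinc_sq sh1 power_mult_distrib tc1[symmetric])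
  have B: "(nsinc (x - real n - 1))\<^sup>2 = (1 / pi\<^sup>2) * (s / (t - c)\<^sup>2)"
    using nz2 by (simp add: nsinc_sq sh2 power_mult_distrib tc2[symmetric])
  have C: "2 * (nsinc (1/2 + real n))\<^sup>2 = (1 / pi\<^sup>2) * (2 / c\<^sup>2)"
    by (simp add: beta_eq c_def power_mult_distrib)
  have "s / (t + c)\<^sup>2 + s / (t - c)\<^sup>2 \<le> 2 / c\<^sup>2"
  proof (rule alg_bound)
    show "3/2 \<le> c" unfolding c_def using n by simp
    show "\<bar>t\<bar> \<le> 1/2" unfolding t_def abs_le_iff using x by linarith
    show "0 \<le> s" unfolding s_def by simp
    show "s \<le> 1 - 36/25 * t\<^sup>2" unfolding s_def t_def by (rule sin_sq_bound[OF x])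
  qed
  then have "(1 / pi\<^sup>2) * (s / (t + c)\<^sup>2 + s / (t - c)\<^sup>2) \<le> (1 / pi\<^sup>2) * (2 / c\<^sup>2)"
    by (intro mult_left_mono) auto
  then show ?thesis unfolding A B C by (simp add: distrib_left)
qed

theorem proposition1:
  fixes r x :: real
  assumes "r \<ge> 1" and "x \<in> {0..1}"
  shows "f_r r x \<ge> f_r r (1/2)"
proof -
  have r: "r \<ge> 1" using assms by simp
  have x: "0 \<le> x" "x \<le> 1" using assms by auto
  define a where "a y = (nsinc y)\<^sup>2" for y
  define \<beta> where "\<beta> n = a (1/2 + real n)" for n :: nat
  define w where "w n = \<beta> n powr (r - 1)" for n
  define A where "A n = a (x + real n) + a (x - real n - 1)" for n
  define D where "D n = A n - 2 * \<beta> n" for n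
  have a_nn: "a y \<ge> 0" for y unfolding a_def by simp
  have \<beta>_pos: "\<beta> n > 0" for n
  proof -
    have "1/2 + real n > 0" by (simp add: add_pos_nonneg)
    then show ?thesis unfolding \<beta>_def a_def beta_eq by simp
  qed
  have \<beta>_mono: "\<beta> m \<le> \<beta> n" if "n \<le> m" for m n
  proof -
    have "pi * (1/2 + real n) \<le> pi * (1/2 + real m)" using that by simp
    then have "(pi * (1/2 + real n))\<^sup>2 \<le> (pi * (1/2 + real m))\<^sup>2"
      by (intro power_mono) (auto intro: add_pos_nonneg)
    moreover have "(pi * (1/2 + real n))\<^sup>2 > 0" by (simp add: add_pos_nonneg)
    ultimately show ?thesis unfolding \<beta>_def a_def beta_eq
      by (intro divide_left_mono) (auto intro: mult_pos_pos)
  qed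
  have w_nn: "w n \<ge> 0" for n unfolding w_def by simp
  have w_mono: "w m \<le> w n" if "n \<le> m" for m n
    unfolding w_def using \<beta>_mono[OF that] \<beta>_pos[of m] r by (intro powr_mono2) auto
  have SX: "(\<lambda>n. a (x + real n) powr r + a (x - real n - 1) powr r) sums f_r r x"
    unfolding a_def by (rule series_rep[OF r x])
  have SH: "(\<lambda>n. 2 * \<beta> n powr r) sums f_r r (1/2)"
  proof -
    have "(\<lambda>n. a (1/2 + real n) powr r + a (1/2 - real n - 1) powr r) sums f_r r (1/2)"
      unfolding a_def by (rule series_rep[OF r]) auto
    moreover have "a (1/2 + real n) powr r + a (1/2 - real n - 1) powr r = 2 * \<beta> n powr r" for n
      unfolding \<beta>_def a_def beta_minus by simp
    ultimately show ?thesis by simp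
  qed
  have SA: "A sums 1" unfolding A_def a_def by (rule pair_sum_one[OF x])
  have SB: "(\<lambda>n. 2 * \<beta> n) sums 1"
  proof -
    have "(\<lambda>n. a (1/2 + real n) + a (1/2 - real n - 1)) sums 1"
      unfolding a_def by (rule pair_sum_one) auto
    moreover have "a (1/2 + real n) + a (1/2 - real n - 1) = 2 * \<beta> n" for n
      unfolding \<beta>_def a_def beta_minus by simp
    ultimately show ?thesis by simp
  qed
  have SD: "D sums 0" unfolding D_def using sums_diff[OF SA SB] by simp
  have D_np: "D n \<le> 0" if "n \<ge> 1" for n
    unfolding D_def A_def \<beta>_def a_def using D_nonpos[OF x that] by simp
  have D0: "D 0 \<ge> 0"
  proof -
    have "(\<lambda>n. D (Suc n)) sums (- D 0)" using SD by (subst sums_Suc_iff) simp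
    moreover have "(\<lambda>n. 0::real) sums 0" by simp
    ultimately have "- D 0 \<le> 0" by (rule sums_le[rotated]) (use D_np in auto)
    then show ?thesis by simp
  qed
  have sumWD: "summable (\<lambda>n. w n * D n)"
  proof (rule summable_comparison_test'[of "\<lambda>n. w 0 * (A n + 2 * \<beta> n)" 0])
    show "summable (\<lambda>n. w 0 * (A n + 2 * \<beta> n))"
      by (intro summable_mult summable_add sums_summable[OF SA] sums_summable[OF SB])
    fix n :: nat
    have An: "A n \<ge> 0" unfolding A_def using a_nn by (simp add: add_nonneg_nonneg)
    have "\<bar>D n\<bar> \<le> A n + 2 * \<beta> n" unfolding D_def using An \<beta>_pos[of n] by linarith
    moreover have "w n \<le> w 0" by (rule w_mono) simp
    ultimately have "w n * \<bar>D n\<bar> \<le> w 0 * (A n + 2 * \<beta> n)"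
      using w_nn[of n] by (intro mult_mono) auto
    then show "norm (w n * D n) \<le> w 0 * (A n + 2 * \<beta> n)"
      using w_nn[of n] by (simp add: abs_mult)
  qed
  define W where "W = (\<Sum>n. w n * D n)"
  have SW: "(\<lambda>n. w n * D n) sums W" unfolding W_def using sumWD by (simp add: summable_sums)
  have W_nn: "W \<ge> 0"
  proof -
    have S1: "(\<lambda>n. w n * D n - w 1 * D n) sums (W - w 1 * 0)"
      by (rule sums_diff[OF SW sums_mult[OF SD]])
    have Z: "(\<lambda>n. 0::real) sums 0" by (rule sums_zero)
    have P: "0 \<le> w n * D n - w 1 * D n" for n
    proof (cases "n = 0")
      case True
      have "w 1 \<le> w 0" by (rule w_mono) simp
      then have "0 \<le> (w 0 - w 1) * D 0" using D0 by (intro mult_nonneg_nonneg) auto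
      then show ?thesis using True by (simp add: algebra_simps)
    next
      case False
      then have n1: "n \<ge> 1" by simp
      have "w n \<le> w 1" by (rule w_mono[OF n1])
      moreover have "D n \<le> 0" by (rule D_np[OF n1])
      ultimately have "0 \<le> (w n - w 1) * D n" by (intro mult_nonpos_nonpos) auto
      then show ?thesis by (simp add: algebra_simps)
    qed
    have "0 \<le> W - w 1 * 0" by (rule sums_le[OF P Z S1])
    then show ?thesis by simp
  qed
  have T: "2 * \<beta> n powr r + r * (w n * D n) \<le> a (x + real n) powr r + a (x - real n - 1) powr r" for n
  proof -
    have t1: "\<beta> n powr r + r * \<beta> n powr (r - 1) * (a (x + real n) - \<beta> n) \<le> a (x + real n) powr r"
      by (rule tangent_powr[OF a_nn \<beta>_pos r])
    have t2: "\<beta> n powr r + r * \<beta> n powr (r - 1) * (a (x - real n - 1) - \<beta> n) \<le> a (x - real n - 1) powr r"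
      by (rule tangent_powr[OF a_nn \<beta>_pos r])
    have "2 * \<beta> n powr r + r * (w n * D n) =
        (\<beta> n powr r + r * \<beta> n powr (r - 1) * (a (x + real n) - \<beta> n)) +
        (\<beta> n powr r + r * \<beta> n powr (r - 1) * (a (x - real n - 1) - \<beta> n))"
      unfolding w_def D_def A_def by (simp add: algebra_simps)
    then show ?thesis using t1 t2 by linarith
  qed
  have S2: "(\<lambda>n. 2 * \<beta> n powr r + r * (w n * D n)) sums (f_r r (1/2) + r * W)"
    by (rule sums_add[OF SH sums_mult[OF SW]])
  have "f_r r (1/2) + r * W \<le> f_r r x"
    by (rule sums_le[OF T S2 SX])
  moreover have "r * W \<ge> 0" using r W_nn by simp
  ultimately show ?thesis by linarith
qed

end
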